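(* Let $H=((0,100],(0,100],p_1,p_2)$ be the two-player game with $p_1(s_1,s_2)=s_1(100-s_1)$ if $s_1<s_2$, $=s_1(100-s_1)/2$ if $s_1=s_2$, $=0$ if $s_1>s_2$, and symmetrically $p_2(s_1,s_2)=s_2(100-s_2)$ if $s_2<s_1$, $=s_2(100-s_2)/2$ if $s_1=s_2$, $=0$ if $s_2>s_1$; take the pure belief structure. Then: (a) $\overline{LR}(H)=(\{50\},\{50\})$ and $(\{50\},\{50\})$ is a fixpoint of $\overline{LR}$, so the outcome of $\overline{LR}$ is $(\{50\},\{50\})$; (b) the operator $R$ defined by $R(H):=((0,50],(0,50])$ and $R(G):=\overline{LR}(G)$ for $G\neq H$ is a relaxation of $\overline{LR}$ whose outcome is $(\emptyset,\emptyset)$; hence $\overline{LR}$ is not order independent; (c) $\overline{GR}(H)=(\{50\},\{50\})$ and $\overline{GR}^2=(\emptyset,\emptyset)$, so the outcome of $\overline{GR}$ is $(\emptyset,\emptyset)$; (d) $LR^1=(\{50\},\{50\})$ while $LR^2$ contains the joint strategy $(49,49)$, so $LR^2\not\subseteq LR^1$.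
   Context: Restrictions of $H$ are pairs $(S_1,S_2)$ with $S_i\subseteq(0,100]$, ordered componentwise. Pure belief structure: beliefs of player $i$ in $G=(S_1,S_2)$ are the opponent's strategies in $S_{-i}$. $s_i\in BR_G(\mu_i)$ iff $p_i(s_i,\mu_i)\ge p_i(s_i',\mu_i)$ for all $s_i'\in S_i$. $GR(G)_i:=\{s_i\mid\exists\mu_i\in S_{-i}: s_i\in BR_H(\mu_i)\}$; $LR(G)_i:=\{s_i\mid\exists\mu_i\in S_{-i}: s_i\in BR_G(\mu_i)\}$; $\overline{T}(G):=T(G)\cap G$. Iterations: $T^0:=H$, $T^{\alpha+1}:=T(T^\alpha)$, $T^\beta:=\bigcap_{\alpha<\beta}T^\alpha$ for limit $\beta$; outcome = first iterate with $T^{\alpha+1}=T^\alpha$. $R$ is a relaxation of $T$ if for all ordinals $\alpha$: (1) $T(R^\alpha)\subseteq R(R^\alpha)$; (2) if $T(R^\alpha)\subseteq R^\alpha$ then $R(R^\alpha)\subseteq R^\alpha$; (3) if $R(R^\alpha)=R^\alpha$ then $T(R^\alpha)=R^\alpha$. $T$ is order independent if the set of outcomes of relaxations of $T$ has at most one element. *)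

theory Defs
  imports Complex_Main
begin

type_synonym restr = "real set \<times> real set"

definition rle :: "restr \<Rightarrow> restr \<Rightarrow> bool" where
  "rle G G' \<longleftrightarrow> fst G \<subseteq> fst G' \<and> snd G \<subseteq> snd G'"

definition Strat :: "real set" where
  "Strat = {0<..100}"

definition Hg :: restr where
  "Hg = (Strat, Strat)"

definition p1 :: "real \<Rightarrow> real \<Rightarrow> real" where
  "p1 s1 s2 = (if s1 < s2 then s1 * (100 - s1)
               else if s1 = s2 then s1 * (100 - s1) / 2 else 0)"

definition p2 :: "real \<Rightarrow> real \<Rightarrow> real" where
  "p2 s1 s2 = (if s2 < s1 then s2 * (100 - s2)
               else if s1 = s2 then s2 * (100 - s2) / 2 else 0)"

text \<open>Best responses in restriction G to a pure belief mu (a strategy of the opponent).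
  Candidate strategies range over the strategies of H; comparison is against S_i of G.\<close>
definition BR1 :: "restr \<Rightarrow> real \<Rightarrow> real set" where
  "BR1 G mu = {s1 \<in> Strat. \<forall>s' \<in> fst G. p1 s1 mu \<ge> p1 s' mu}"

definition BR2 :: "restr \<Rightarrow> real \<Rightarrow> real set" where
  "BR2 G mu = {s2 \<in> Strat. \<forall>s' \<in> snd G. p2 mu s2 \<ge> p2 mu s'}"

definition LR :: "restr \<Rightarrow> restr" where
  "LR G = ({s1. \<exists>mu \<in> snd G. s1 \<in> BR1 G mu}, {s2. \<exists>mu \<in> fst G. s2 \<in> BR2 G mu})"

definition GR :: "restr \<Rightarrow> restr" where
  "GR G = ({s1. \<exists>mu \<in> snd G. s1 \<in> BR1 Hg mu}, {s2. \<exists>mu \<in> fst G. s2 \<in> BR2 Hg mu})"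

definition barop :: "(restr \<Rightarrow> restr) \<Rightarrow> restr \<Rightarrow> restr" where
  "barop T G = (fst (T G) \<inter> fst G, snd (T G) \<inter> snd G)"

text \<open>Transfinite iteration, ordinals represented by elements of a well-ordered type 'o.\<close>
definition succ_of :: "'o::wellorder \<Rightarrow> 'o \<Rightarrow> bool" where
  "succ_of b a \<longleftrightarrow> b < a \<and> (\<forall>c. \<not> (b < c \<and> c < a))"

definition iter :: "restr \<Rightarrow> (restr \<Rightarrow> restr) \<Rightarrow> 'o::wellorder \<Rightarrow> restr" where
  "iter H0 T = wfrec {(x, y). x < y}
     (\<lambda>f a. if \<exists>b. succ_of b a then T (f (THE b. succ_of b a))
            else (fst H0 \<inter> \<Inter> ((\<lambda>b. fst (f b)) ` {..<a}),
                  snd H0 \<inter> \<Inter> ((\<lambda>b. snd (f b)) ` {..<a})))"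

definition relaxation :: "'o::wellorder itself \<Rightarrow> restr \<Rightarrow> (restr \<Rightarrow> restr) \<Rightarrow> (restr \<Rightarrow> restr) \<Rightarrow> bool" where
  "relaxation _ H0 R T \<longleftrightarrow> (\<forall>a::'o. let X = iter H0 R a in
      rle (T X) (R X) \<and> (rle (T X) X \<longrightarrow> rle (R X) X) \<and> (R X = X \<longrightarrow> T X = X))"

definition outcome :: "'o::wellorder itself \<Rightarrow> restr \<Rightarrow> (restr \<Rightarrow> restr) \<Rightarrow> restr \<Rightarrow> bool" where
  "outcome _ H0 T X \<longleftrightarrow> (\<exists>a::'o. iter H0 T a = X \<and> T X = X \<and>
      (\<forall>b<a. T (iter H0 T b) \<noteq> iter H0 T b))"

definition order_independent :: "'o::wellorder itself \<Rightarrow> restr \<Rightarrow> (restr \<Rightarrow> restr) \<Rightarrow> bool" where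
  "order_independent t H0 T \<longleftrightarrow> (\<forall>X Y.
      (\<exists>R. relaxation t H0 R T \<and> outcome t H0 R X) \<longrightarrow>
      (\<exists>R. relaxation t H0 R T \<and> outcome t H0 R Y) \<longrightarrow> X = Y)"

definition Rrel :: "restr \<Rightarrow> restr" where
  "Rrel G = (if G = Hg then ({0<..50}, {0<..50}) else barop LR G)"

end

theory Submission
  imports Defs
begin

lemma succ_unique: "succ_of b a \<Longrightarrow> succ_of c a \<Longrightarrow> b = c"
  unfolding succ_of_def by (meson linorder_neqE)

lemma succ_the: "succ_of b a \<Longrightarrow> (THE b. succ_of b a) = b"
  using succ_unique by blast

lemma iter_unfold:
  "iter H0 T (a::'o::wellorder) = (if \<exists>b. succ_of b a then T (iter H0 T (THE b. succ_of b a))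
     else (fst H0 \<inter> \<Inter> ((\<lambda>b. fst (iter H0 T b)) ` {..<a}),
           snd H0 \<inter> \<Inter> ((\<lambda>b. snd (iter H0 T b)) ` {..<a})))"
proof -
  have e: "iter H0 T a = (\<lambda>f a. if \<exists>b. succ_of b a then T (f (THE b. succ_of b a))
            else (fst H0 \<inter> \<Inter> ((\<lambda>b. fst (f b)) ` {..<a}),
                  snd H0 \<inter> \<Inter> ((\<lambda>b. snd (f b)) ` {..<a})))
      (cut (iter H0 T) {(x, y). x < y} a) a"
    unfolding iter_def by (rule wfrec[OF wf])
  show ?thesis
  proof (cases "\<exists>b. succ_of b a")
    case True
    then obtain b where b: "succ_of b a" by blast
    hence "b < a" by (simp add: succ_of_def)
    thus ?thesis using e True b by (simp add: succ_the cut_apply)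
  next
    case False
    have i1: "(\<lambda>b. fst (cut (iter H0 T) {(x, y). x < y} a b)) ` {..<a} = (\<lambda>b. fst (iter H0 T b)) ` {..<a}"
      by (auto simp: cut_apply)
    have i2: "(\<lambda>b. snd (cut (iter H0 T) {(x, y). x < y} a b)) ` {..<a} = (\<lambda>b. snd (iter H0 T b)) ` {..<a}"
      by (auto simp: cut_apply)
    show ?thesis using e False i1 i2 by simp
  qed
qed


definition a0 :: "'o::wellorder" where "a0 = (LEAST x. True)"

lemma a0_le: "a0 \<le> x"
  unfolding a0_def by (rule Least_le) simp

lemma a0_nosucc: "\<not> (\<exists>b. succ_of b a0)"
  using a0_le unfolding succ_of_def by (meson leD)

lemma iter_a0: "iter H0 T a0 = H0"
proof -
  have e: "{..<a0} = {}" by (simp add: lessThan_def) (meson a0_le leD)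
  show ?thesis by (subst iter_unfold) (simp add: a0_nosucc e)
qed

lemma iter_succ: "succ_of b a \<Longrightarrow> iter H0 T a = T (iter H0 T b)"
  by (subst iter_unfold) (auto simp: succ_the)

lemma three:
  assumes "infinite (UNIV :: 'o::wellorder set)"
  obtains a1 a2 :: "'o::wellorder" where "succ_of a0 a1" "succ_of a1 a2"
    "\<And>x. x = a0 \<or> x = a1 \<or> a1 < x" "\<And>x. a1 < x \<Longrightarrow> x = a2 \<or> a2 < x"
proof -
  obtain x :: 'o where x: "x \<notin> {a0}" using assms
    by (metis ex_new_if_finite finite.emptyI finite_insert)
  define a1 where "a1 = (LEAST x::'o. a0 < x)"
  have x0: "a0 < x" using x a0_le[of x] by auto
  have a1: "a0 < a1" unfolding a1_def by (rule LeastI[of _ x]) (rule x0)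
  have a1l: "\<And>y. a0 < y \<Longrightarrow> a1 \<le> y" unfolding a1_def by (rule Least_le)
  obtain y :: 'o where y: "y \<notin> {a0, a1}" using assms
    by (metis ex_new_if_finite finite.emptyI finite_insert)
  define a2 where "a2 = (LEAST x::'o. a1 < x)"
  have y1: "a1 < y" using y a0_le[of y] a1l[of y] by (metis insertCI le_neq_trans)
  have a2: "a1 < a2" unfolding a2_def by (rule LeastI[of _ y]) (rule y1)
  have a2l: "\<And>y. a1 < y \<Longrightarrow> a2 \<le> y" unfolding a2_def by (rule Least_le)
  show ?thesis
  proof
    show "succ_of a0 a1" unfolding succ_of_def using a1 a1l by (meson leD)
    show "succ_of a1 a2" unfolding succ_of_def using a2 a2l by (meson leD)
    fix z :: 'o
    show "z = a0 \<or> z = a1 \<or> a1 < z" using a0_le[of z] a1l[of z] by auto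
    assume "a1 < z" thus "z = a2 \<or> a2 < z" using a2l[of z] by auto
  qed
qed

definition BRg :: "real set \<Rightarrow> real \<Rightarrow> real set" where
  "BRg A mu = {s \<in> Strat. \<forall>s' \<in> A. p1 s mu \<ge> p1 s' mu}"

lemma p2_p1: "p2 mu s = p1 s mu"
  unfolding p1_def p2_def by auto

lemma BR1_g: "BR1 G mu = BRg (fst G) mu"
  unfolding BR1_def BRg_def by simp

lemma BR2_g: "BR2 G mu = BRg (snd G) mu"
  unfolding BR2_def BRg_def p2_p1 by simp

lemma BRg_empty:
  assumes "0 < mu" "mu \<le> 50" "{0<..50} \<subseteq> A"
  shows "BRg A mu = {}"
proof -
  have "\<not> (\<forall>s' \<in> A. p1 s mu \<ge> p1 s' mu)" if s: "s \<in> Strat" for s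
  proof (cases "s < mu")
    case True
    define s' where "s' = (s + mu) / 2"
    have s0: "0 < s" using s by (simp add: Strat_def)
    have ss: "s < s'" "s' < mu" using True unfolding s'_def by auto
    have "s' \<in> A" using assms s0 ss by auto
    moreover have "p1 s' mu > p1 s mu"
    proof -
      have "p1 s' mu = s' * (100 - s')" "p1 s mu = s * (100 - s)" using ss True by (simp_all add: p1_def)
      moreover have "(s' - s) * (100 - s - s') > 0" using ss assms by (intro mult_pos_pos) auto
      ultimately show ?thesis by (simp add: algebra_simps)
    qed
    ultimately show ?thesis by force
  next
    case False
    define s' where "s' = mu / 2"
    have "s' \<in> A" using assms unfolding s'_def by auto
    moreover have "p1 s' mu > p1 s mu"
    proof -
      have a: "p1 s' mu = mu / 2 * (100 - mu / 2)" using assms by (simp add: p1_def s'_def)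
      have b: "p1 s mu \<le> mu * (100 - mu) / 2" using False assms by (auto simp: p1_def)
      have "mu * mu > 0" using assms by simp
      moreover have "mu / 2 * (100 - mu / 2) - mu * (100 - mu) / 2 = mu * mu / 4" by (simp add: field_simps)
      ultimately have "mu / 2 * (100 - mu / 2) > mu * (100 - mu) / 2" by linarith
      thus ?thesis using a b by linarith
    qed
    ultimately show ?thesis by force
  qed
  thus ?thesis unfolding BRg_def by auto
qed

lemma p1_le: "s \<in> Strat \<Longrightarrow> p1 s mu \<le> 2500"
proof -
  assume "s \<in> Strat"
  have "s * (100 - s) \<le> 2500" using sum_squares_ge_zero[of "s - 50" 0]
    by (simp add: algebra_simps power2_eq_square)
  moreover have "s * (100 - s) \<ge> 0" using \<open>s \<in> Strat\<close> by (simp add: Strat_def)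
  ultimately show ?thesis by (auto simp: p1_def)
qed

lemma BRg_50:
  assumes "50 < mu" "mu \<le> 100"
  shows "BRg Strat mu = {50}"
proof -
  have p50: "p1 50 mu = 2500" using assms by (simp add: p1_def)
  have "50 \<in> BRg Strat mu" unfolding BRg_def using p50 p1_le by (auto simp: Strat_def)
  moreover have "s = 50" if s: "s \<in> BRg Strat mu" for s
  proof (rule ccontr)
    assume ne: "s \<noteq> 50"
    have sS: "s \<in> Strat" using s unfolding BRg_def by auto
    have "(50::real) \<in> Strat" by (simp add: Strat_def)
    hence ge: "p1 s mu \<ge> 2500" using s p50 unfolding BRg_def by force
    have "(s - 50) * (s - 50) > 0" using ne by (metis eq_iff_diff_eq_0 not_real_square_gt_zero)
    hence lt: "s * (100 - s) < 2500" by (simp add: algebra_simps)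
    have "s * (100 - s) \<ge> 0" using sS by (simp add: Strat_def)
    hence "p1 s mu < 2500" using lt by (auto simp: p1_def)
    thus False using ge by simp
  qed
  ultimately show ?thesis by blast
qed

lemma BRg_49: "49 \<in> BRg {50} 50" "50 \<in> BRg {50} 50"
  unfolding BRg_def Strat_def p1_def by auto

lemma sub50: "{0<..50} \<subseteq> Strat" by (auto simp: Strat_def)

definition K :: "real set \<Rightarrow> real set \<Rightarrow> real set" where
  "K A B = {s. \<exists>mu\<in>B. s \<in> BRg A mu}"

lemma LR_K: "LR G = (K (fst G) (snd G), K (snd G) (fst G))"
  unfolding LR_def K_def BR1_g BR2_g by simp

lemma GR_K: "GR G = (K Strat (snd G), K Strat (fst G))"
  unfolding GR_def K_def BR1_g BR2_g Hg_def by simp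

lemma K_Strat: "K Strat Strat = {50}"
proof
  show "K Strat Strat \<subseteq> {50}"
  proof
    fix s assume "s \<in> K Strat Strat"
    then obtain mu where mu: "mu \<in> Strat" "s \<in> BRg Strat mu" unfolding K_def by auto
    show "s \<in> {50}"
    proof (cases "mu \<le> 50")
      case True thus ?thesis using mu BRg_empty[of mu Strat, OF _ _ sub50] by (auto simp: Strat_def)
    next
      case False thus ?thesis using mu BRg_50[of mu] by (auto simp: Strat_def)
    qed
  qed
  show "{50} \<subseteq> K Strat Strat"
    using BRg_50[of 100] unfolding K_def by (auto simp: Strat_def)
qed

lemma K_50: "K Strat {50} = {}"
  using BRg_empty[of 50 Strat, OF _ _ sub50] unfolding K_def by (auto simp: Strat_def)

lemma K_G1: "K {0<..50} {0<..50} = {}"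
  using BRg_empty[of _ "{0<..50}"] unfolding K_def by auto

lemma K_F: "49 \<in> K {50} {50}" "50 \<in> K {50} {50}"
  using BRg_49 unfolding K_def by auto

lemma LR_Hg: "LR Hg = ({50}, {50})"
  unfolding LR_K Hg_def by (simp add: K_Strat)

lemma GR_Hg: "GR Hg = ({50}, {50})"
  unfolding GR_K Hg_def by (simp add: K_Strat)

lemma barop_LR_Hg: "barop LR Hg = ({50}, {50})"
  unfolding barop_def LR_Hg by (simp add: Hg_def Strat_def)

lemma barop_GR_Hg: "barop GR Hg = ({50}, {50})"
  unfolding barop_def GR_Hg by (simp add: Hg_def Strat_def)

lemma barop_LR_F: "barop LR ({50}, {50}) = ({50}, {50})"
  unfolding barop_def LR_K using K_F by auto

lemma barop_GR_F: "barop GR ({50}, {50}) = ({}, {})"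
  unfolding barop_def GR_K using K_50 by auto

lemma barop_LR_G1: "barop LR ({0<..50}, {0<..50}) = ({}, {})"
  unfolding barop_def LR_K using K_G1 by auto

lemma barop_E: "barop T ({}, {}) = ({}, {})"
  unfolding barop_def by simp

lemma Hg_ne: "Hg \<noteq> ({50}, {50})" "Hg \<noteq> ({0<..50}, {0<..50})" "Hg \<noteq> ({}, {})"
proof -
  have h: "(100::real) \<in> fst Hg" by (simp add: Hg_def Strat_def)
  have "(100::real) \<notin> {50}" "(100::real) \<notin> {0<..50}" "(100::real) \<notin> {}" by auto
  thus "Hg \<noteq> ({50}, {50})" "Hg \<noteq> ({0<..50}, {0<..50})" "Hg \<noteq> ({}, {})"
    using h by (metis fst_conv)+
qed

lemma Rrel_vals: "Rrel Hg = ({0<..50}, {0<..50})" "Rrel ({0<..50}, {0<..50}) = ({}, {})"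
   "Rrel ({}, {}) = ({}, {})"
  unfolding Rrel_def using Hg_ne barop_LR_G1 barop_E by auto

lemma relax_self: "relaxation t H0 T T"
  unfolding relaxation_def rle_def Let_def by simp

theorem mainTheorem14:
  assumes "infinite (UNIV :: 'o::wellorder set)"
  shows "barop LR Hg = ({50}, {50}) \<and> barop LR ({50}, {50}) = ({50}, {50})
       \<and> outcome TYPE('o) Hg (barop LR) ({50}, {50})
       \<and> relaxation TYPE('o) Hg Rrel (barop LR) \<and> outcome TYPE('o) Hg Rrel ({}, {})
       \<and> \<not> order_independent TYPE('o) Hg (barop LR)
       \<and> barop GR Hg = ({50}, {50}) \<and> barop GR (barop GR Hg) = ({}, {})
       \<and> outcome TYPE('o) Hg (barop GR) ({}, {})
       \<and> LR Hg = ({50}, {50}) \<and> 49 \<in> fst (LR (LR Hg)) \<and> 49 \<in> snd (LR (LR Hg))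
       \<and> \<not> rle (LR (LR Hg)) (LR Hg)"
proof -
  obtain a1 a2 :: 'o where s1: "succ_of a0 a1" and s2: "succ_of a1 a2"
    and c1: "\<And>x. x = a0 \<or> x = a1 \<or> a1 < x" and c2: "\<And>x. a1 < x \<Longrightarrow> x = a2 \<or> a2 < x"
    using three[OF assms] by blast
  have l01: "a0 < a1" and l12: "a1 < a2" using s1 s2 by (auto simp: succ_of_def)
  have below1: "b < a1 \<Longrightarrow> b = a0" for b using c1[of b] l01 by auto
  have below2: "b < a2 \<Longrightarrow> b = a0 \<or> b = a1" for b using c1[of b] c2[of b] by auto
  define F where "F = ({50::real}, {50::real})"
  define E where "E = ({}::real set, {}::real set)"
  define G1 where "G1 = ({0<..50::real}, {0<..50::real})"
  have FE: "F \<noteq> E" and G1E: "G1 \<noteq> E" unfolding F_def E_def G1_def by auto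
  have iL0: "iter Hg (barop LR) (a0::'o) = Hg" by (rule iter_a0)
  have iL1: "iter Hg (barop LR) a1 = F" using iter_succ[OF s1] iL0 barop_LR_Hg F_def by simp
  have iG0: "iter Hg (barop GR) (a0::'o) = Hg" by (rule iter_a0)
  have iG1: "iter Hg (barop GR) a1 = F" using iter_succ[OF s1] iG0 barop_GR_Hg F_def by simp
  have iG2: "iter Hg (barop GR) a2 = E" using iter_succ[OF s2] iG1 barop_GR_F F_def E_def by simp
  have iR0: "iter Hg Rrel (a0::'o) = Hg" by (rule iter_a0)
  have iR1: "iter Hg Rrel a1 = G1" using iter_succ[OF s1] iR0 Rrel_vals G1_def by simp
  have iR2: "iter Hg Rrel a2 = E" using iter_succ[OF s2] iR1 Rrel_vals G1_def E_def by simp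
  have iRE: "a1 < a \<Longrightarrow> iter Hg Rrel a = E" for a
  proof (induction a rule: less_induct)
    case (less a)
    show ?case
    proof (cases "a = a2")
      case True thus ?thesis using iR2 by simp
    next
      case False
      hence a2a: "a2 < a" using c2[OF less.prems] by auto
      show ?thesis
      proof (cases "\<exists>b. succ_of b a")
        case True
        then obtain b where b: "succ_of b a" by blast
        hence "b < a" "\<not> (b < a2)" using a2a unfolding succ_of_def by auto
        hence "a1 < b" using l12 by auto
        hence "iter Hg Rrel b = E" using less.IH \<open>b < a\<close> by blast
        thus ?thesis using iter_succ[OF b] Rrel_vals E_def by simp
      next
        case False
        have f: "fst (iter Hg Rrel a2) = {}" "snd (iter Hg Rrel a2) = {}" using iR2 E_def by auto
        have "fst (iter Hg Rrel a) = {}"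
          by (subst iter_unfold) (use False a2a f in auto)
        moreover have "snd (iter Hg Rrel a) = {}"
          by (subst iter_unfold) (use False a2a f in auto)
        ultimately show ?thesis unfolding E_def by (simp add: prod_eq_iff)
      qed
    qed
  qed
  have iRall: "iter Hg Rrel a = Hg \<or> iter Hg Rrel a = G1 \<or> iter Hg Rrel a = E" for a :: 'o
    using c1[of a] iR0 iR1 iRE by auto
  have oL: "outcome TYPE('o) Hg (barop LR) F"
    unfolding outcome_def
    using iL1 barop_LR_F below1 iL0 barop_LR_Hg Hg_ne F_def by metis
  have oR: "outcome TYPE('o) Hg Rrel E"
    unfolding outcome_def
  proof (intro exI[of _ a2] conjI allI impI)
    show "iter Hg Rrel a2 = E" by (rule iR2)
    show "Rrel E = E" using Rrel_vals E_def by simp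
    fix b assume "b < a2"
    thus "Rrel (iter Hg Rrel b) \<noteq> iter Hg Rrel b"
      using below2[OF \<open>b < a2\<close>] iR0 iR1 Rrel_vals Hg_ne G1E unfolding G1_def E_def by auto
  qed
  have oG: "outcome TYPE('o) Hg (barop GR) E"
    unfolding outcome_def
  proof (intro exI[of _ a2] conjI allI impI)
    show "iter Hg (barop GR) a2 = E" by (rule iG2)
    show "barop GR E = E" using barop_E E_def by simp
    fix b assume "b < a2"
    thus "barop GR (iter Hg (barop GR) b) \<noteq> iter Hg (barop GR) b"
      using below2[OF \<open>b < a2\<close>] iG0 iG1 barop_GR_Hg barop_GR_F Hg_ne FE unfolding F_def E_def by auto
  qed
  have rel: "relaxation TYPE('o) Hg Rrel (barop LR)"
    unfolding relaxation_def Let_def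
  proof
    fix a :: 'o
    consider "iter Hg Rrel a = Hg" | "iter Hg Rrel a = G1" | "iter Hg Rrel a = E" using iRall by blast
    thus "rle (barop LR (iter Hg Rrel a)) (Rrel (iter Hg Rrel a)) \<and>
          (rle (barop LR (iter Hg Rrel a)) (iter Hg Rrel a) \<longrightarrow> rle (Rrel (iter Hg Rrel a)) (iter Hg Rrel a)) \<and>
          (Rrel (iter Hg Rrel a) = iter Hg Rrel a \<longrightarrow> barop LR (iter Hg Rrel a) = iter Hg Rrel a)"
    proof cases
      case 1 thus ?thesis using barop_LR_Hg Rrel_vals Hg_ne unfolding rle_def
        by (auto simp: Hg_def Strat_def)
    next
      case 2 thus ?thesis using barop_LR_G1 Rrel_vals unfolding rle_def G1_def by auto
    next
      case 3 thus ?thesis using barop_E Rrel_vals unfolding rle_def E_def by auto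
    qed
  qed
  have noi: "\<not> order_independent TYPE('o) Hg (barop LR)"
    unfolding order_independent_def using relax_self oL rel oR FE by blast
  have LL: "LR (LR Hg) = (K {50} {50}, K {50} {50})" by (simp only: LR_Hg) (simp add: LR_K)
  show ?thesis
    using barop_LR_Hg barop_LR_F oL rel oR noi barop_GR_Hg barop_GR_F oG LR_Hg K_F LL
    unfolding F_def E_def rle_def by auto
qed

end
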